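(* Let $F$ and $\hat F$ be distribution functions on $\mathbb R$ with finite second moments, and for $t\in\mathbb R$ let $\gamma(t)=1-F(t)$ and $\hat\gamma(t)=1-\hat F(t)$ be the p-values of the statistic value $t$ computed under $F$ and $\hat F$, respectively. Let $\phi(\xi)=\sup_{z\in\mathbb R}\big(F(z+\xi)-F(z)\big)$. Then for every $t\in\mathbb R$, $$|\hat\gamma(t)-\gamma(t)|\le d_2(\hat F,F)^{2/3}+\phi\big(d_2(\hat F,F)^{2/3}\big).$$
   Context: $d_2(\hat F,F)$ denotes the Wasserstein-2 distance between the distributions with CDFs $\hat F$ and $F$. *)

theory Defs
  imports "HOL-Probability.Probability"
begin

definition couplings :: "real measure \<Rightarrow> real measure \<Rightarrow> (real \<times> real) measure set" where
  "couplings M N = {\<pi>. prob_space \<pi> \<and> sets \<pi> = sets (borel \<Otimes>\<^sub>M borel) \<and>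
      distr \<pi> borel fst = M \<and> distr \<pi> borel snd = N}"

definition wasserstein2 :: "real measure \<Rightarrow> real measure \<Rightarrow> real" where
  "wasserstein2 M N =
     sqrt (enn2real (INF \<pi>\<in>couplings M N. \<integral>\<^sup>+ p. ennreal ((fst p - snd p)\<^sup>2) \<partial>\<pi>))"

end

theory Submission
  imports Defs
begin

lemma coupling_bound:
  assumes pi: "\<pi> \<in> couplings A B" and e: "(\<integral>\<^sup>+ p. ennreal ((fst p - snd p)\<^sup>2) \<partial>\<pi>) \<le> ennreal e"
    and dl: "\<delta> > 0" and e0: "e \<ge> 0"
  shows "cdf A s \<le> cdf B (s + \<delta>) + e / \<delta>\<^sup>2"
proof -
  have ps: "prob_space \<pi>" and sp: "sets \<pi> = sets (borel \<Otimes>\<^sub>M borel)"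
    and dA: "distr \<pi> borel fst = A" and dB: "distr \<pi> borel snd = B"
    using pi by (auto simp: couplings_def)
  interpret prob_space \<pi> by (rule ps)
  have spc: "space \<pi> = UNIV" using sets_eq_imp_space_eq[OF sp] by (simp add: space_pair_measure)
  define u where "u p = (fst p - snd p)\<^sup>2" for p :: "real \<times> real"
  have mcong: "f \<in> borel_measurable \<pi> \<longleftrightarrow> f \<in> borel_measurable (borel \<Otimes>\<^sub>M borel)" for f :: "real \<times> real \<Rightarrow> real"
    by (subst measurable_cong_sets[OF sp refl]) (rule refl)
  have mu: "u \<in> borel_measurable \<pi>"
    unfolding mcong u_def by measurable
  have mfst: "fst \<in> borel_measurable \<pi>" unfolding mcong by measurable
  have msnd: "snd \<in> borel_measurable \<pi>" unfolding mcong by measurable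
  have nn: "(\<integral>\<^sup>+ p. ennreal (u p) \<partial>\<pi>) \<le> ennreal e" using e by (simp add: u_def)
  have int: "integrable \<pi> u"
    unfolding integrable_iff_bounded using mu nn by (auto simp: u_def top_unique intro: le_less_trans)
  have "ennreal (integral\<^sup>L \<pi> u) = (\<integral>\<^sup>+ p. ennreal (u p) \<partial>\<pi>)"
    by (rule nn_integral_eq_integral[symmetric]) (auto simp: int u_def)
  then have "ennreal (integral\<^sup>L \<pi> u) \<le> ennreal e" using nn by simp
  then have ie: "integral\<^sup>L \<pi> u \<le> e" using e0 ennreal_le_iff by blast
  have mk: "measure \<pi> {p\<in>space \<pi>. u p \<ge> \<delta>\<^sup>2} \<le> integral\<^sup>L \<pi> u / \<delta>\<^sup>2"
    by (rule integral_Markov_inequality_measure[OF int, where A="space \<pi>"]) (use dl in \<open>auto simp: u_def\<close>)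
  have "cdf A s = measure \<pi> (fst -` {..s} \<inter> space \<pi>)"
    unfolding cdf_def dA[symmetric] by (rule measure_distr) (auto simp: mfst)
  also have "\<dots> \<le> measure \<pi> ((snd -` {..s+\<delta>} \<inter> space \<pi>) \<union> {p\<in>space \<pi>. u p \<ge> \<delta>\<^sup>2})"
  proof (rule finite_measure_mono)
    show "fst -` {..s} \<inter> space \<pi> \<subseteq> snd -` {..s + \<delta>} \<inter> space \<pi> \<union> {p \<in> space \<pi>. \<delta>\<^sup>2 \<le> u p}"
    proof
      fix p assume "p \<in> fst -` {..s} \<inter> space \<pi>"
      then have "fst p \<le> s" by auto
      moreover have "snd p > s + \<delta> \<Longrightarrow> \<delta>\<^sup>2 \<le> u p"
      proof -
        assume "snd p > s + \<delta>"
        then have "\<delta> \<le> snd p - fst p" using \<open>fst p \<le> s\<close> by simp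
        then have "\<delta>\<^sup>2 \<le> (snd p - fst p)\<^sup>2" using dl by (intro power_mono) auto
        then show ?thesis by (simp add: u_def power2_commute)
      qed
      ultimately show "p \<in> snd -` {..s + \<delta>} \<inter> space \<pi> \<union> {p \<in> space \<pi>. \<delta>\<^sup>2 \<le> u p}"
        by (auto simp: spc not_less[symmetric])
    qed
    show "snd -` {..s + \<delta>} \<inter> space \<pi> \<union> {p \<in> space \<pi>. \<delta>\<^sup>2 \<le> u p} \<in> events"
      using mu msnd by measurable
  qed
  also have "\<dots> \<le> measure \<pi> (snd -` {..s+\<delta>} \<inter> space \<pi>) + measure \<pi> {p\<in>space \<pi>. u p \<ge> \<delta>\<^sup>2}"
  proof -
    have ev1: "snd -` {..s+\<delta>} \<inter> space \<pi> \<in> events" using msnd by measurable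
    have ev2: "{p\<in>space \<pi>. u p \<ge> \<delta>\<^sup>2} \<in> events" using mu by measurable
    show ?thesis by (rule measure_subadditive[OF ev1 ev2]) (simp_all add: emeasure_eq_measure)
  qed
  also have "measure \<pi> (snd -` {..s+\<delta>} \<inter> space \<pi>) = cdf B (s + \<delta>)"
    unfolding cdf_def dB[symmetric] by (rule measure_distr[symmetric]) (auto simp: msnd)
  also have "measure \<pi> {p\<in>space \<pi>. u p \<ge> \<delta>\<^sup>2} \<le> e / \<delta>\<^sup>2"
    using mk ie dl by (meson divide_right_mono order_trans zero_le_power2)
  finally show ?thesis by simp
qed

lemma coupling_bound2:
  assumes pi: "\<pi> \<in> couplings A B" and e: "(\<integral>\<^sup>+ p. ennreal ((fst p - snd p)\<^sup>2) \<partial>\<pi>) \<le> ennreal e"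
    and dl: "\<delta> > 0" and e0: "e \<ge> 0"
  shows "cdf B s \<le> cdf A (s + \<delta>) + e / \<delta>\<^sup>2"
proof -
  have ps: "prob_space \<pi>" and sp: "sets \<pi> = sets (borel \<Otimes>\<^sub>M borel)"
    and dA: "distr \<pi> borel fst = A" and dB: "distr \<pi> borel snd = B"
    using pi by (auto simp: couplings_def)
  interpret prob_space \<pi> by (rule ps)
  have spc: "space \<pi> = UNIV" using sets_eq_imp_space_eq[OF sp] by (simp add: space_pair_measure)
  define u where "u p = (fst p - snd p)\<^sup>2" for p :: "real \<times> real"
  have mcong: "f \<in> borel_measurable \<pi> \<longleftrightarrow> f \<in> borel_measurable (borel \<Otimes>\<^sub>M borel)" for f :: "real \<times> real \<Rightarrow> real"
    by (subst measurable_cong_sets[OF sp refl]) (rule refl)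
  have mu: "u \<in> borel_measurable \<pi>"
    unfolding mcong u_def by measurable
  have mfst: "fst \<in> borel_measurable \<pi>" unfolding mcong by measurable
  have msnd: "snd \<in> borel_measurable \<pi>" unfolding mcong by measurable
  have nn: "(\<integral>\<^sup>+ p. ennreal (u p) \<partial>\<pi>) \<le> ennreal e" using e by (simp add: u_def)
  have int: "integrable \<pi> u"
    unfolding integrable_iff_bounded using mu nn by (auto simp: u_def top_unique intro: le_less_trans)
  have "ennreal (integral\<^sup>L \<pi> u) = (\<integral>\<^sup>+ p. ennreal (u p) \<partial>\<pi>)"
    by (rule nn_integral_eq_integral[symmetric]) (auto simp: int u_def)
  then have "ennreal (integral\<^sup>L \<pi> u) \<le> ennreal e" using nn by simp
  then have ie: "integral\<^sup>L \<pi> u \<le> e" using e0 ennreal_le_iff by blast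
  have mk: "measure \<pi> {p\<in>space \<pi>. u p \<ge> \<delta>\<^sup>2} \<le> integral\<^sup>L \<pi> u / \<delta>\<^sup>2"
    by (rule integral_Markov_inequality_measure[OF int, where A="space \<pi>"]) (use dl in \<open>auto simp: u_def\<close>)
  have "cdf B s = measure \<pi> (snd -` {..s} \<inter> space \<pi>)"
    unfolding cdf_def dB[symmetric] by (rule measure_distr) (auto simp: msnd)
  also have "\<dots> \<le> measure \<pi> ((fst -` {..s+\<delta>} \<inter> space \<pi>) \<union> {p\<in>space \<pi>. u p \<ge> \<delta>\<^sup>2})"
  proof (rule finite_measure_mono)
    show "snd -` {..s} \<inter> space \<pi> \<subseteq> fst -` {..s + \<delta>} \<inter> space \<pi> \<union> {p \<in> space \<pi>. \<delta>\<^sup>2 \<le> u p}"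
    proof
      fix p assume "p \<in> snd -` {..s} \<inter> space \<pi>"
      then have "snd p \<le> s" by auto
      moreover have "fst p > s + \<delta> \<Longrightarrow> \<delta>\<^sup>2 \<le> u p"
      proof -
        assume "fst p > s + \<delta>"
        then have "\<delta> \<le> fst p - snd p" using \<open>snd p \<le> s\<close> by simp
        then have "\<delta>\<^sup>2 \<le> (fst p - snd p)\<^sup>2" using dl by (intro power_mono) auto
        then show ?thesis by (simp add: u_def power2_commute)
      qed
      ultimately show "p \<in> fst -` {..s + \<delta>} \<inter> space \<pi> \<union> {p \<in> space \<pi>. \<delta>\<^sup>2 \<le> u p}"
        by (auto simp: spc not_less[symmetric])
    qed
    show "fst -` {..s + \<delta>} \<inter> space \<pi> \<union> {p \<in> space \<pi>. \<delta>\<^sup>2 \<le> u p} \<in> events"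
      using mu mfst by measurable
  qed
  also have "\<dots> \<le> measure \<pi> (fst -` {..s+\<delta>} \<inter> space \<pi>) + measure \<pi> {p\<in>space \<pi>. u p \<ge> \<delta>\<^sup>2}"
  proof -
    have ev1: "fst -` {..s+\<delta>} \<inter> space \<pi> \<in> events" using mfst by measurable
    have ev2: "{p\<in>space \<pi>. u p \<ge> \<delta>\<^sup>2} \<in> events" using mu by measurable
    show ?thesis by (rule measure_subadditive[OF ev1 ev2]) (simp_all add: emeasure_eq_measure)
  qed
  also have "measure \<pi> (fst -` {..s+\<delta>} \<inter> space \<pi>) = cdf A (s + \<delta>)"
    unfolding cdf_def dA[symmetric] by (rule measure_distr[symmetric]) (auto simp: mfst)
  also have "measure \<pi> {p\<in>space \<pi>. u p \<ge> \<delta>\<^sup>2} \<le> e / \<delta>\<^sup>2"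
    using mk ie dl by (meson divide_right_mono order_trans zero_le_power2)
  finally show ?thesis by simp
qed


lemma product_coupling:
  assumes A: "real_distribution A" and B: "real_distribution B"
    and iA: "integrable A (\<lambda>x. x\<^sup>2)" and iB: "integrable B (\<lambda>x. x\<^sup>2)"
  shows "A \<Otimes>\<^sub>M B \<in> couplings A B"
    and "(\<integral>\<^sup>+ p. ennreal ((fst p - snd p)\<^sup>2) \<partial>(A \<Otimes>\<^sub>M B)) < \<infinity>"
proof -
  interpret A: real_distribution A by (rule A)
  interpret B: real_distribution B by (rule B)
  interpret P: pair_prob_space A B by unfold_locales
  have sA: "sets A = sets borel" and sB: "sets B = sets borel" by simp_all
  have sP: "sets (A \<Otimes>\<^sub>M B) = sets (borel \<Otimes>\<^sub>M borel)"
    by (rule sets_pair_measure_cong[OF sA sB])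
  have d1: "distr (A \<Otimes>\<^sub>M B) borel fst = A"
  proof -
    have "distr (A \<Otimes>\<^sub>M B) borel fst = distr (A \<Otimes>\<^sub>M B) A fst"
      by (rule distr_cong) simp_all
    also have "\<dots> = A" by (rule B.distr_pair_fst)
    finally show ?thesis .
  qed
  have d2: "distr (A \<Otimes>\<^sub>M B) borel snd = B"
  proof -
    have "distr (A \<Otimes>\<^sub>M B) borel snd = distr (A \<Otimes>\<^sub>M B) B snd"
      by (rule distr_cong) simp_all
    also have "\<dots> = B"
    proof (intro measure_eqI)
      fix X assume X: "X \<in> sets (distr (A \<Otimes>\<^sub>M B) B snd)"
      then have X': "X \<in> sets B" by simp
      have "emeasure (distr (A \<Otimes>\<^sub>M B) B snd) X = emeasure (A \<Otimes>\<^sub>M B) (space A \<times> X)"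
        using X' by (auto simp add: emeasure_distr space_pair_measure dest: sets.sets_into_space
            intro!: arg_cong2[where f=emeasure])
      also have "\<dots> = emeasure B X"
        using B.emeasure_pair_measure_Times[where N=A and A="space A" and B=X] X' A.emeasure_space_1 by simp
      finally show "emeasure (distr (A \<Otimes>\<^sub>M B) B snd) X = emeasure B X" .
    qed simp
    finally show ?thesis .
  qed
  show "A \<Otimes>\<^sub>M B \<in> couplings A B"
    unfolding couplings_def using sP d1 d2 P.prob_space_axioms by auto
  have fA: "(\<integral>\<^sup>+ x. ennreal (x\<^sup>2) \<partial>A) < \<infinity>" using iA by (simp add: integrable_iff_bounded)
  have fB: "(\<integral>\<^sup>+ x. ennreal (x\<^sup>2) \<partial>B) < \<infinity>" using iB by (simp add: integrable_iff_bounded)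
  have e1: "(\<integral>\<^sup>+ p. ennreal ((fst p)\<^sup>2) \<partial>(A \<Otimes>\<^sub>M B)) = (\<integral>\<^sup>+ x. ennreal (x\<^sup>2) \<partial>A)"
  proof -
    have "(\<integral>\<^sup>+ x. ennreal (x\<^sup>2) \<partial>A) = (\<integral>\<^sup>+ x. ennreal (x\<^sup>2) \<partial>(distr (A \<Otimes>\<^sub>M B) borel fst))"
      by (simp add: d1)
    also have "\<dots> = (\<integral>\<^sup>+ p. ennreal ((fst p)\<^sup>2) \<partial>(A \<Otimes>\<^sub>M B))"
      by (rule nn_integral_distr) (simp_all add: measurable_cong_sets[OF sP refl])
    finally show ?thesis by simp
  qed
  have e2: "(\<integral>\<^sup>+ p. ennreal ((snd p)\<^sup>2) \<partial>(A \<Otimes>\<^sub>M B)) = (\<integral>\<^sup>+ x. ennreal (x\<^sup>2) \<partial>B)"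
  proof -
    have "(\<integral>\<^sup>+ x. ennreal (x\<^sup>2) \<partial>B) = (\<integral>\<^sup>+ x. ennreal (x\<^sup>2) \<partial>(distr (A \<Otimes>\<^sub>M B) borel snd))"
      by (simp add: d2)
    also have "\<dots> = (\<integral>\<^sup>+ p. ennreal ((snd p)\<^sup>2) \<partial>(A \<Otimes>\<^sub>M B))"
      by (rule nn_integral_distr) (simp_all add: measurable_cong_sets[OF sP refl])
    finally show ?thesis by simp
  qed
  have "(\<integral>\<^sup>+ p. ennreal ((fst p - snd p)\<^sup>2) \<partial>(A \<Otimes>\<^sub>M B))
      \<le> (\<integral>\<^sup>+ p. 2 * ennreal ((fst p)\<^sup>2) + 2 * ennreal ((snd p)\<^sup>2) \<partial>(A \<Otimes>\<^sub>M B))"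
  proof (rule nn_integral_mono)
    fix p :: "real \<times> real"
    have "(fst p - snd p)\<^sup>2 \<le> 2 * (fst p)\<^sup>2 + 2 * (snd p)\<^sup>2"
      using zero_le_power2[of "fst p + snd p"] power2_diff[of "fst p" "snd p"] power2_sum[of "fst p" "snd p"]
      by linarith
    then have "ennreal ((fst p - snd p)\<^sup>2) \<le> ennreal (2 * (fst p)\<^sup>2 + 2 * (snd p)\<^sup>2)"
      by (rule ennreal_leI)
    also have "\<dots> = 2 * ennreal ((fst p)\<^sup>2) + 2 * ennreal ((snd p)\<^sup>2)"
      by (simp add: ennreal_plus ennreal_mult)
    finally show "ennreal ((fst p - snd p)\<^sup>2) \<le> 2 * ennreal ((fst p)\<^sup>2) + 2 * ennreal ((snd p)\<^sup>2)" .
  qed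
  also have "\<dots> = 2 * (\<integral>\<^sup>+ p. ennreal ((fst p)\<^sup>2) \<partial>(A \<Otimes>\<^sub>M B)) + 2 * (\<integral>\<^sup>+ p. ennreal ((snd p)\<^sup>2) \<partial>(A \<Otimes>\<^sub>M B))"
    by (subst nn_integral_add) (auto simp: nn_integral_cmult)
  also have "\<dots> < \<infinity>" using fA fB by (simp add: e1 e2 ennreal_mult_less_top)
  finally show "(\<integral>\<^sup>+ p. ennreal ((fst p - snd p)\<^sup>2) \<partial>(A \<Otimes>\<^sub>M B)) < \<infinity>" .
qed

lemma right_cont_bound:
  assumes N: "real_distribution N" and h: "\<And>\<eta>. \<eta> > 0 \<Longrightarrow> a \<le> cdf N (t + \<eta>)"
  shows "a \<le> cdf N t"
proof -
  interpret real_distribution N by (rule N)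
  have "(cdf N \<longlongrightarrow> cdf N t) (at_right t)"
    using cdf_is_right_cont[of t] by (simp add: continuous_within)
  moreover have "eventually (\<lambda>y. a \<le> cdf N y) (at_right t)"
  proof -
    have "eventually (\<lambda>y. y > t) (at_right t)" by (simp add: eventually_at_right_less)
    then show ?thesis
    proof (rule eventually_mono)
      fix y assume "y > t"
      then show "a \<le> cdf N y" using h[of "y - t"] by simp
    qed
  qed
  ultimately show ?thesis by (intro tendsto_lowerbound) auto
qed


theorem lemma3:
  fixes M Mh :: "real measure" and t :: real
  assumes "real_distribution M" and "real_distribution Mh"
    and "integrable M (\<lambda>x. x\<^sup>2)" and "integrable Mh (\<lambda>x. x\<^sup>2)"
  shows "let F = cdf M; Fh = cdf Mh;
             \<gamma> = (\<lambda>s. 1 - F s); \<gamma>h = (\<lambda>s. 1 - Fh s);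
             \<phi> = (\<lambda>\<xi>. SUP z. F (z + \<xi>) - F z);
             d = wasserstein2 Mh M
         in \<bar>\<gamma>h t - \<gamma> t\<bar> \<le> d powr (2/3) + \<phi> (d powr (2/3))"
proof -
  interpret RM: real_distribution M by (rule assms(1))
  interpret RH: real_distribution Mh by (rule assms(2))
  define F where "F = cdf M"
  define Fh where "Fh = cdf Mh"
  define I where "I = (INF \<pi>\<in>couplings Mh M. \<integral>\<^sup>+ p. ennreal ((fst p - snd p)\<^sup>2) \<partial>\<pi>)"
  define d where "d = wasserstein2 Mh M"
  have dI: "d = sqrt (enn2real I)" unfolding d_def I_def wasserstein2_def ..
  have d0: "d \<ge> 0" unfolding dI by simp
  have Ifin: "I < \<infinity>"
  proof -
    have "I \<le> (\<integral>\<^sup>+ p. ennreal ((fst p - snd p)\<^sup>2) \<partial>(Mh \<Otimes>\<^sub>M M))"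
      unfolding I_def by (rule INF_lower) (rule product_coupling(1)[OF assms(2,1,4,3)])
    also have "\<dots> < \<infinity>" by (rule product_coupling(2)[OF assms(2,1,4,3)])
    finally show ?thesis .
  qed
  have Ieq: "I = ennreal (d\<^sup>2)"
    unfolding dI using Ifin by simp
  have approx: "\<exists>\<pi>\<in>couplings Mh M. (\<integral>\<^sup>+ p. ennreal ((fst p - snd p)\<^sup>2) \<partial>\<pi>) \<le> ennreal (d\<^sup>2 + \<epsilon>)"
    if "\<epsilon> > 0" for \<epsilon>
  proof -
    have "I < ennreal (d\<^sup>2 + \<epsilon>)" unfolding Ieq using that by (simp add: ennreal_less_iff)
    then obtain \<pi> where "\<pi> \<in> couplings Mh M" "(\<integral>\<^sup>+ p. ennreal ((fst p - snd p)\<^sup>2) \<partial>\<pi>) < ennreal (d\<^sup>2 + \<epsilon>)"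
      unfolding I_def by (auto simp: INF_less_iff)
    then show ?thesis by (auto intro: less_imp_le)
  qed
  have B1: "Fh s \<le> F (s + \<delta>) + d\<^sup>2 / \<delta>\<^sup>2" if "\<delta> > 0" for s \<delta>
  proof (rule field_le_epsilon)
    fix e :: real assume "e > 0"
    then have "e * \<delta>\<^sup>2 > 0" using that by simp
    then obtain \<pi> where "\<pi> \<in> couplings Mh M" "(\<integral>\<^sup>+ p. ennreal ((fst p - snd p)\<^sup>2) \<partial>\<pi>) \<le> ennreal (d\<^sup>2 + e * \<delta>\<^sup>2)"
      using approx by blast
    from coupling_bound[OF this that] have "Fh s \<le> F (s + \<delta>) + (d\<^sup>2 + e * \<delta>\<^sup>2) / \<delta>\<^sup>2"
      using \<open>e * \<delta>\<^sup>2 > 0\<close> unfolding F_def Fh_def by (simp add: add_nonneg_nonneg)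
    also have "(d\<^sup>2 + e * \<delta>\<^sup>2) / \<delta>\<^sup>2 = d\<^sup>2 / \<delta>\<^sup>2 + e" using that by (simp add: field_simps)
    finally show "Fh s \<le> F (s + \<delta>) + d\<^sup>2 / \<delta>\<^sup>2 + e" by simp
  qed
  have B2: "F s \<le> Fh (s + \<delta>) + d\<^sup>2 / \<delta>\<^sup>2" if "\<delta> > 0" for s \<delta>
  proof (rule field_le_epsilon)
    fix e :: real assume "e > 0"
    then have "e * \<delta>\<^sup>2 > 0" using that by simp
    then obtain \<pi> where "\<pi> \<in> couplings Mh M" "(\<integral>\<^sup>+ p. ennreal ((fst p - snd p)\<^sup>2) \<partial>\<pi>) \<le> ennreal (d\<^sup>2 + e * \<delta>\<^sup>2)"
      using approx by blast
    from coupling_bound2[OF this that] have "F s \<le> Fh (s + \<delta>) + (d\<^sup>2 + e * \<delta>\<^sup>2) / \<delta>\<^sup>2"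
      using \<open>e * \<delta>\<^sup>2 > 0\<close> unfolding F_def Fh_def by (simp add: add_nonneg_nonneg)
    also have "(d\<^sup>2 + e * \<delta>\<^sup>2) / \<delta>\<^sup>2 = d\<^sup>2 / \<delta>\<^sup>2 + e" using that by (simp add: field_simps)
    finally show "F s \<le> Fh (s + \<delta>) + d\<^sup>2 / \<delta>\<^sup>2 + e" by simp
  qed
  define \<phi> where "\<phi> = (\<lambda>\<xi>. SUP z. F (z + \<xi>) - F z)"
  have phi_ge: "F (z + \<xi>) - F z \<le> \<phi> \<xi>" for z \<xi>
  proof -
    have "bdd_above (range (\<lambda>z. F (z + \<xi>) - F z))"
    proof (rule bdd_aboveI[where M=1])
      fix x assume "x \<in> range (\<lambda>z. F (z + \<xi>) - F z)"
      then obtain z where "x = F (z + \<xi>) - F z" by auto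
      moreover have "F (z + \<xi>) \<le> 1" "F z \<ge> 0" unfolding F_def
        using RM.cdf_bounded_prob RM.cdf_nonneg by auto
      ultimately show "x \<le> 1" by linarith
    qed
    then show ?thesis unfolding \<phi>_def by (rule cSUP_upper[OF UNIV_I])
  qed
  have main: "\<bar>Fh t - F t\<bar> \<le> d powr (2/3) + \<phi> (d powr (2/3))"
  proof (cases "d = 0")
    case True
    have "\<phi> 0 = 0" unfolding \<phi>_def by simp
    moreover have "Fh t \<le> F t"
      unfolding F_def by (rule right_cont_bound[OF assms(1)]) (use B1 True in \<open>simp add: F_def\<close>)
    moreover have "F t \<le> Fh t"
      unfolding Fh_def by (rule right_cont_bound[OF assms(2)]) (use B2 True in \<open>simp add: Fh_def\<close>)
    ultimately show ?thesis using True by simp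
  next
    case False
    then have dp: "d > 0" using d0 by simp
    define \<delta> where "\<delta> = d powr (2/3)"
    have \<delta>p: "\<delta> > 0" unfolding \<delta>_def using dp by simp
    have q: "d\<^sup>2 / \<delta>\<^sup>2 = \<delta>"
    proof -
      have h1: "\<delta>\<^sup>2 = d powr (4/3)" unfolding \<delta>_def using dp
        by (simp add: powr_powr[symmetric] powr_realpow[symmetric] power2_eq_square powr_add[symmetric])
      have h2: "d\<^sup>2 = d powr 2" using dp by (simp add: powr_realpow)
      have "d\<^sup>2 / \<delta>\<^sup>2 = d powr 2 / d powr (4/3)" by (simp only: h1 h2)
      also have "\<dots> = d powr (2 - 4/3)" by (rule powr_diff[symmetric])
      also have "\<dots> = \<delta>" unfolding \<delta>_def by simp
      finally show ?thesis .
    qed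
    have "Fh t \<le> F (t + \<delta>) + \<delta>" using B1[OF \<delta>p, of t] q by simp
    moreover have "F (t + \<delta>) \<le> F t + \<phi> \<delta>" using phi_ge[of t \<delta>] by simp
    moreover have "F (t - \<delta>) \<le> Fh t + \<delta>" using B2[OF \<delta>p, of "t - \<delta>"] q by simp
    moreover have "F t \<le> F (t - \<delta>) + \<phi> \<delta>" using phi_ge[of "t - \<delta>" \<delta>] by simp
    ultimately show ?thesis unfolding \<delta>_def by linarith
  qed
  then show ?thesis unfolding Let_def F_def[symmetric] Fh_def[symmetric] d_def[symmetric]
    by (simp add: \<phi>_def abs_minus_commute)
qed

end
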